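(* For any smooth function $f$ on the total space $\mathfrak X$ and all $k,l$, $$\overline{v_l}(\xi_kf)-\xi_k(\overline{v_l}f)=\bar P(e_{k\bar l})P(f)-2f_{k\bar l}\Box f+\lambda^{-1}\partial_zf_{k\bar l}\,\partial_{\bar z}f.$$
   Context: $g\ge2$, $n=3g-3$. Over a local chart of (a manifold cover of) $\mathcal M_g$ with holomorphic coordinates $s_1,\dots,s_n$, $\partial_i=\partial/\partial s_i$, let $\mathfrak X$ be the universal family with local fiber coordinate $z$. Each fiber carries the hyperbolic metric $\frac{\sqrt{-1}}2\lambda\,dz\wedge d\bar z$ with $\partial_z\partial_{\bar z}\log\lambda=\lambda$. $a_i=-\lambda^{-1}\partial_i\partial_{\bar z}\log\lambda$, $A_i=\partial_{\bar z}a_i$, $v_i=\partial_i+a_i\partial_z$, $\overline{v_l}$ its complex conjugate. $\Box=-\lambda^{-1}\partial_z\partial_{\bar z}$. $e_{i\bar j}=\partial_i\partial_{\bar j}\log\lambda-\lambda a_i\overline{a_j}$, $f_{i\bar j}=A_i\overline{A_j}$. $P(f)=\partial_z(\lambda^{-1}\partial_zf)$, $\bar P(f)=\partial_{\bar z}(\lambda^{-1}\partial_{\bar z}f)$, $\xi_k(f)=-\lambda^{-1}\partial_z(A_k\partial_zf)$. *)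

theory Defs
  imports "HOL-Analysis.Analysis"
begin

text \<open>Local chart: points are (s, z) with base coordinates s in C^n (index type 'n)
  and fiber coordinate z in C. Functions are complex valued; derivatives are
  Wirtinger derivatives built from the real Frechet derivative.\<close>

type_synonym 'n pt = "(complex ^ 'n) \<times> complex"

definition pd :: "('n::finite pt \<Rightarrow> complex) \<Rightarrow> 'n pt \<Rightarrow> 'n pt \<Rightarrow> complex" where
  "pd F v p = frechet_derivative F (at p) v"

fun dd :: "'n::finite pt list \<Rightarrow> ('n pt \<Rightarrow> complex) \<Rightarrow> ('n pt \<Rightarrow> complex)" where
  "dd [] F = F"
| "dd (v # vs) F = (\<lambda>p. pd (dd vs F) v p)"

definition cinf_on :: "'n::finite pt set \<Rightarrow> ('n pt \<Rightarrow> complex) \<Rightarrow> bool" where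
  "cinf_on U F \<longleftrightarrow> (\<forall>vs. dd vs F differentiable_on U)"

definition dz :: "('n::finite pt \<Rightarrow> complex) \<Rightarrow> 'n pt \<Rightarrow> complex" where
  "dz F p = (pd F (0, 1) p - \<i> * pd F (0, \<i>) p) / 2"

definition dzb :: "('n::finite pt \<Rightarrow> complex) \<Rightarrow> 'n pt \<Rightarrow> complex" where
  "dzb F p = (pd F (0, 1) p + \<i> * pd F (0, \<i>) p) / 2"

definition ds :: "'n::finite \<Rightarrow> ('n pt \<Rightarrow> complex) \<Rightarrow> 'n pt \<Rightarrow> complex" where
  "ds k F p = (pd F (axis k 1, 0) p - \<i> * pd F (axis k \<i>, 0) p) / 2"

definition dsb :: "'n::finite \<Rightarrow> ('n pt \<Rightarrow> complex) \<Rightarrow> 'n pt \<Rightarrow> complex" where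
  "dsb k F p = (pd F (axis k 1, 0) p + \<i> * pd F (axis k \<i>, 0) p) / 2"

definition Lam :: "('n::finite pt \<Rightarrow> real) \<Rightarrow> 'n pt \<Rightarrow> complex" where
  "Lam lam p = complex_of_real (lam p)"

definition logL :: "('n::finite pt \<Rightarrow> real) \<Rightarrow> 'n pt \<Rightarrow> complex" where
  "logL lam p = complex_of_real (ln (lam p))"

definition aa :: "('n::finite pt \<Rightarrow> real) \<Rightarrow> 'n \<Rightarrow> 'n pt \<Rightarrow> complex" where
  "aa lam i p = - ds i (dzb (logL lam)) p / Lam lam p"

definition AA :: "('n::finite pt \<Rightarrow> real) \<Rightarrow> 'n \<Rightarrow> 'n pt \<Rightarrow> complex" where
  "AA lam i = dzb (aa lam i)"

definition vbar :: "('n::finite pt \<Rightarrow> real) \<Rightarrow> 'n \<Rightarrow> ('n pt \<Rightarrow> complex) \<Rightarrow> 'n pt \<Rightarrow> complex" where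
  "vbar lam l F p = dsb l F p + cnj (aa lam l p) * dzb F p"

definition Box :: "('n::finite pt \<Rightarrow> real) \<Rightarrow> ('n pt \<Rightarrow> complex) \<Rightarrow> 'n pt \<Rightarrow> complex" where
  "Box lam F p = - dz (dzb F) p / Lam lam p"

definition ee :: "('n::finite pt \<Rightarrow> real) \<Rightarrow> 'n \<Rightarrow> 'n \<Rightarrow> 'n pt \<Rightarrow> complex" where
  "ee lam i j p = ds i (dsb j (logL lam)) p - Lam lam p * aa lam i p * cnj (aa lam j p)"

definition ff :: "('n::finite pt \<Rightarrow> real) \<Rightarrow> 'n \<Rightarrow> 'n \<Rightarrow> 'n pt \<Rightarrow> complex" where
  "ff lam i j p = AA lam i p * cnj (AA lam j p)"

definition PP :: "('n::finite pt \<Rightarrow> real) \<Rightarrow> ('n pt \<Rightarrow> complex) \<Rightarrow> 'n pt \<Rightarrow> complex" where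
  "PP lam F = dz (\<lambda>q. dz F q / Lam lam q)"

definition PPbar :: "('n::finite pt \<Rightarrow> real) \<Rightarrow> ('n pt \<Rightarrow> complex) \<Rightarrow> 'n pt \<Rightarrow> complex" where
  "PPbar lam F = dzb (\<lambda>q. dzb F q / Lam lam q)"

definition xi :: "('n::finite pt \<Rightarrow> real) \<Rightarrow> 'n \<Rightarrow> ('n pt \<Rightarrow> complex) \<Rightarrow> 'n pt \<Rightarrow> complex" where
  "xi lam k F p = - dz (\<lambda>q. AA lam k q * dz F q) p / Lam lam p"

end

theory Submission
  imports Defs
begin


lemma schwarz_half:
  fixes F :: "'a::real_normed_vector \<Rightarrow> 'b::real_normed_vector"
  assumes U: "open U" and pU: "p \<in> U"
    and dF: "\<And>q. q \<in> U \<Longrightarrow> (F has_derivative DF q) (at q)"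
    and dG: "((\<lambda>q. DF q v) has_derivative D) (at p)"
    and e: "e > 0"
  shows "\<exists>d>0. \<forall>t. 0 < t \<and> t < d \<longrightarrow>
     norm (F (p + t *\<^sub>R v + t *\<^sub>R w) - F (p + t *\<^sub>R v) - F (p + t *\<^sub>R w) + F p - (t * t) *\<^sub>R D w) \<le> e * (t * t)"
proof -
  define M where "M = 2 * norm v + norm w + 1"
  have M: "M > 0" "M \<ge> 1" unfolding M_def using norm_ge_zero[of v] norm_ge_zero[of w] by linarith+
  define e' where "e' = e / M"
  have e': "e' > 0" using e M unfolding e'_def by auto
  have blD: "bounded_linear D" using dG has_derivative_bounded_linear by blast
  obtain d1 where d1: "d1 > 0" and
    d1h: "\<And>y. norm (y - p) < d1 \<Longrightarrow> norm (DF y v - DF p v - D (y - p)) \<le> e' * norm (y - p)"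
    using dG e' unfolding has_derivative_at_alt by blast
  obtain d2 where d2: "d2 > 0" and d2h: "ball p d2 \<subseteq> U"
    using U pU open_contains_ball by blast
  define d where "d = min d1 d2 / M"
  have d: "d > 0" using d1 d2 M unfolding d_def by auto
  show ?thesis
  proof (intro exI[of _ d] conjI allI impI)
    show "d > 0" by fact
    fix t :: real assume t: "0 < t \<and> t < d"
    have tM: "t * M < min d1 d2" using t M unfolding d_def by (simp add: field_simps)
    have inU: "p + s *\<^sub>R v + r *\<^sub>R w \<in> U" and nb: "norm (s *\<^sub>R v + r *\<^sub>R w) < min d1 d2"
      if "s \<in> {0..t}" "r \<in> {0..t}" for s r
    proof -
      have "norm (s *\<^sub>R v + r *\<^sub>R w) \<le> s * norm v + r * norm w"
        using that by (smt (verit) atLeastAtMost_iff norm_scaleR norm_triangle_ineq)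
      also have "\<dots> \<le> t * norm v + t * norm w"
        using that by (intro add_mono mult_right_mono) auto
      also have "\<dots> < t * M" using t norm_ge_zero[of v] unfolding M_def by (simp add: field_simps add_pos_nonneg)
      finally show "norm (s *\<^sub>R v + r *\<^sub>R w) < min d1 d2" using tM by linarith
      then have "p + s *\<^sub>R v + r *\<^sub>R w \<in> ball p d2"
        by (simp add: dist_norm add.assoc) (metis minus_diff_eq norm_minus_cancel diff_minus_eq_add add.commute)
      then show "p + s *\<^sub>R v + r *\<^sub>R w \<in> U" using d2h by blast
    qed
    define c where "c = t *\<^sub>R D w"
    define g where "g s = F (p + s *\<^sub>R v + t *\<^sub>R w) - F (p + s *\<^sub>R v) - s *\<^sub>R c" for s
    define g' where "g' s = (\<lambda>ds::real. ds *\<^sub>R (DF (p + s *\<^sub>R v + t *\<^sub>R w) v - DF (p + s *\<^sub>R v) v - c))" for s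
    have lin: "DF q (ds *\<^sub>R v) = ds *\<^sub>R DF q v" if "q \<in> U" for q ds
      using dF[OF that] has_derivative_bounded_linear linear_scale
      by (metis bounded_linear.linear)
    have derg: "(g has_derivative g' s) (at s within {0..t})" if s: "s \<in> {0..t}" for s
    proof -
      have q1: "p + s *\<^sub>R v + t *\<^sub>R w \<in> U" using inU[of s t] s t by auto
      have q2: "p + s *\<^sub>R v \<in> U" using inU[of s 0] s t by auto
      have h1: "((\<lambda>s. p + s *\<^sub>R v + t *\<^sub>R w) has_derivative (\<lambda>ds. ds *\<^sub>R v)) (at s)"
        by (auto intro!: derivative_eq_intros)
      have h2: "((\<lambda>s. p + s *\<^sub>R v) has_derivative (\<lambda>ds. ds *\<^sub>R v)) (at s)"
        by (auto intro!: derivative_eq_intros)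
      have c1: "((\<lambda>s. F (p + s *\<^sub>R v + t *\<^sub>R w)) has_derivative (\<lambda>ds. DF (p + s *\<^sub>R v + t *\<^sub>R w) (ds *\<^sub>R v))) (at s)"
        using has_derivative_compose[OF h1 dF[OF q1]] by (simp add: o_def)
      have c2: "((\<lambda>s. F (p + s *\<^sub>R v)) has_derivative (\<lambda>ds. DF (p + s *\<^sub>R v) (ds *\<^sub>R v))) (at s)"
        using has_derivative_compose[OF h2 dF[OF q2]] by (simp add: o_def)
      have c3: "((\<lambda>s. s *\<^sub>R c) has_derivative (\<lambda>ds. ds *\<^sub>R c)) (at s)"
        by (auto intro!: derivative_eq_intros)
      have "(g has_derivative (\<lambda>ds. DF (p + s *\<^sub>R v + t *\<^sub>R w) (ds *\<^sub>R v) - DF (p + s *\<^sub>R v) (ds *\<^sub>R v) - ds *\<^sub>R c)) (at s)"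
        unfolding g_def by (intro has_derivative_diff c1 c2 c3)
      moreover have "(\<lambda>ds. DF (p + s *\<^sub>R v + t *\<^sub>R w) (ds *\<^sub>R v) - DF (p + s *\<^sub>R v) (ds *\<^sub>R v) - ds *\<^sub>R c) = g' s"
        unfolding g'_def by (auto simp: lin[OF q1] lin[OF q2] scaleR_diff_right)
      ultimately show ?thesis by (simp add: has_derivative_at_withinI)
    qed
    have bnd: "onorm (g' s) \<le> e' * (t * M)" if s: "s \<in> {0..t}" for s
    proof (rule onorm_le)
      fix ds :: real
      let ?h1 = "s *\<^sub>R v + t *\<^sub>R w" and ?h2 = "s *\<^sub>R v"
      have n1: "norm ?h1 < d1" using nb[of s t] s t by auto
      have n2: "norm ?h2 < d1" using nb[of s 0] s t by auto
      have a1: "norm (DF (p + ?h1) v - DF p v - D ?h1) \<le> e' * norm ?h1"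
        using d1h[of "p + ?h1"] n1 by (simp add: add.assoc)
      have a2: "norm (DF (p + ?h2) v - DF p v - D ?h2) \<le> e' * norm ?h2"
        using d1h[of "p + ?h2"] n2 by simp
      have Dlin: "D ?h1 - D ?h2 = c"
        unfolding c_def using blD by (simp add: linear_simps bounded_linear.linear)
      have "DF (p + s *\<^sub>R v + t *\<^sub>R w) v - DF (p + s *\<^sub>R v) v - c
          = (DF (p + ?h1) v - DF p v - D ?h1) - (DF (p + ?h2) v - DF p v - D ?h2)"
        using Dlin by (simp add: add.assoc algebra_simps)
      then have "norm (DF (p + s *\<^sub>R v + t *\<^sub>R w) v - DF (p + s *\<^sub>R v) v - c)
          \<le> e' * norm ?h1 + e' * norm ?h2"
        using a1 a2 norm_triangle_ineq4 by (smt (verit))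
      also have "\<dots> \<le> e' * (t * M)"
      proof -
        have "norm ?h1 \<le> s * norm v + t * norm w"
          using s by (smt (verit) atLeastAtMost_iff norm_scaleR norm_triangle_ineq t)
        moreover have "norm ?h2 \<le> s * norm v" using s by auto
        moreover have "s * norm v \<le> t * norm v" using s by (intro mult_right_mono) auto
        ultimately have "norm ?h1 + norm ?h2 \<le> t * M" unfolding M_def using t
          by (simp add: field_simps)
        then show ?thesis using e' by (smt (verit) distrib_left mult_left_mono)
      qed
      finally show "norm (g' s ds) \<le> e' * (t * M) * norm ds"
        unfolding g'_def by (simp add: mult.commute mult_left_mono)
    qed
    have "norm (g t - g 0) \<le> e' * (t * M) * norm (t - 0)"
      by (rule differentiable_bound[of "{0..t}" g g']) (use derg bnd t in auto)
    also have "\<dots> = e * (t * t)" unfolding e'_def using M t by simp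
    also have "g t - g 0 = F (p + t *\<^sub>R v + t *\<^sub>R w) - F (p + t *\<^sub>R v) - F (p + t *\<^sub>R w) + F p - (t * t) *\<^sub>R D w"
      unfolding g_def c_def by (simp add: algebra_simps)
    finally show "norm (F (p + t *\<^sub>R v + t *\<^sub>R w) - F (p + t *\<^sub>R v) - F (p + t *\<^sub>R w) + F p - (t * t) *\<^sub>R D w) \<le> e * (t * t)" .
  qed
qed

lemma schwarz_gen:
  fixes F :: "'a::real_normed_vector \<Rightarrow> 'b::real_normed_vector"
  assumes U: "open U" and pU: "p \<in> U"
    and dF: "\<And>q. q \<in> U \<Longrightarrow> (F has_derivative DF q) (at q)"
    and d1: "((\<lambda>q. DF q v) has_derivative D1) (at p)"
    and d2: "((\<lambda>q. DF q w) has_derivative D2) (at p)"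
  shows "D1 w = D2 v"
proof -
  have key: "norm (D1 w - D2 v) \<le> 2 * e" if e: "e > 0" for e
  proof -
    obtain d where d: "d > 0" and dh: "\<And>t. 0 < t \<and> t < d \<Longrightarrow>
     norm (F (p + t *\<^sub>R v + t *\<^sub>R w) - F (p + t *\<^sub>R v) - F (p + t *\<^sub>R w) + F p - (t * t) *\<^sub>R D1 w) \<le> e * (t * t)"
      using schwarz_half[OF U pU dF d1 e, of w] by blast
    obtain d' where d': "d' > 0" and dh': "\<And>t. 0 < t \<and> t < d' \<Longrightarrow>
     norm (F (p + t *\<^sub>R w + t *\<^sub>R v) - F (p + t *\<^sub>R w) - F (p + t *\<^sub>R v) + F p - (t * t) *\<^sub>R D2 v) \<le> e * (t * t)"
      using schwarz_half[OF U pU dF d2 e, of v] by blast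
    define t where "t = min d d' / 2"
    have t: "0 < t" "t < d" "t < d'" using d d' unfolding t_def by auto
    define X where "X = F (p + t *\<^sub>R v + t *\<^sub>R w) - F (p + t *\<^sub>R v) - F (p + t *\<^sub>R w) + F p"
    have X2: "F (p + t *\<^sub>R w + t *\<^sub>R v) - F (p + t *\<^sub>R w) - F (p + t *\<^sub>R v) + F p = X"
      unfolding X_def by (simp add: algebra_simps)
    have a: "norm (X - (t * t) *\<^sub>R D1 w) \<le> e * (t * t)" using dh[of t] t unfolding X_def by auto
    have b: "norm (X - (t * t) *\<^sub>R D2 v) \<le> e * (t * t)" using dh'[of t] t X2 by auto
    have eqq: "(t * t) *\<^sub>R (D1 w - D2 v) = (X - (t * t) *\<^sub>R D2 v) - (X - (t * t) *\<^sub>R D1 w)"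
      by (simp add: algebra_simps)
    have "norm ((t * t) *\<^sub>R (D1 w - D2 v)) \<le> norm (X - (t * t) *\<^sub>R D2 v) + norm (X - (t * t) *\<^sub>R D1 w)"
      unfolding eqq by (rule norm_triangle_ineq4)
    also have "\<dots> \<le> (t * t) * (2 * e)" using a b by (simp add: algebra_simps)
    finally have "(t * t) * norm (D1 w - D2 v) \<le> (t * t) * (2 * e)" by simp
    then show ?thesis using t by (simp add: mult_le_cancel_left_pos)
  qed
  have "norm (D1 w - D2 v) \<le> 0"
  proof (rule field_le_epsilon)
    fix e :: real assume "e > 0"
    then have "norm (D1 w - D2 v) \<le> 2 * (e / 2)" using key[of "e/2"] by simp
    then show "norm (D1 w - D2 v) \<le> 0 + e" by simp
  qed
  then show ?thesis by simp
qed




lemma pd_local: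
  assumes "open U" "p \<in> U" "\<And>q. q \<in> U \<Longrightarrow> F q = G q"
  shows "pd F v p = pd G v p"
proof -
  have "(F has_derivative D) (at p) \<longleftrightarrow> (G has_derivative D) (at p)" for D
    using assms has_derivative_transform_within_open[of _ D p UNIV U] by (metis (mono_tags))
  then show ?thesis unfolding pd_def frechet_derivative_def by simp
qed

lemma diff_at_local:
  assumes "open U" "p \<in> U" "\<And>q. q \<in> U \<Longrightarrow> F q = G q" "F differentiable at p"
  shows "G differentiable at p"
  using assms has_derivative_transform_within_open[of F _ p UNIV U G] unfolding differentiable_def
  by (metis (mono_tags))

lemma diff_on_local:
  assumes "open U" "\<And>q. q \<in> U \<Longrightarrow> F q = G q" "F differentiable_on U"
  shows "G differentiable_on U"
  using assms diff_at_local[OF assms(1) _ assms(2)] by (simp add: differentiable_on_eq_differentiable_at)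

lemma dd_append: "dd vs (pd F v) = dd (vs @ [v]) F"
  by (induction vs) auto

lemma cinf_pd: "cinf_on U F \<Longrightarrow> cinf_on U (pd F v)"
  unfolding cinf_on_def by (simp add: dd_append)

lemma cinf_diff: "cinf_on U F \<Longrightarrow> F differentiable_on U"
  unfolding cinf_on_def by (metis dd.simps(1))

lemma cinf_coinduct:
  assumes U: "open U" and P: "P F"
    and step: "\<And>F. P F \<Longrightarrow> F differentiable_on U \<and> (\<forall>v. \<exists>G. P G \<and> (\<forall>q\<in>U. pd F v q = G q))"
  shows "cinf_on U F"
proof -
  have "\<forall>F. P F \<longrightarrow> (\<exists>G. P G \<and> (\<forall>q\<in>U. dd vs F q = G q))" for vs
  proof (induction vs)
    case Nil then show ?case by auto
  next
    case (Cons v vs)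
    show ?case
    proof (intro allI impI)
      fix F assume "P F"
      then obtain G where G: "P G" "\<forall>q\<in>U. dd vs F q = G q" using Cons by blast
      obtain G' where G': "P G'" "\<forall>q\<in>U. pd G v q = G' q" using step[OF G(1)] by blast
      have "\<forall>q\<in>U. dd (v # vs) F q = G' q"
        using pd_local[OF U _ , of _ "dd vs F" G v] G(2) G'(2) by auto
      then show "\<exists>G. P G \<and> (\<forall>q\<in>U. dd (v # vs) F q = G q)" using G' by blast
    qed
  qed
  then show ?thesis unfolding cinf_on_def
    using P step diff_on_local[OF U] by metis
qed

lemma cinf_local:
  assumes "open U" "cinf_on U F" "\<And>q. q \<in> U \<Longrightarrow> F q = G q"
  shows "cinf_on U G"
proof (rule cinf_coinduct[OF assms(1), where P = "\<lambda>H. \<exists>F. cinf_on U F \<and> (\<forall>q\<in>U. F q = H q)"])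
  show "\<exists>F. cinf_on U F \<and> (\<forall>q\<in>U. F q = G q)" using assms by blast
next
  fix H assume "\<exists>F. cinf_on U F \<and> (\<forall>q\<in>U. F q = H q)"
  then obtain F where F: "cinf_on U F" "\<forall>q\<in>U. F q = H q" by blast
  show "H differentiable_on U \<and> (\<forall>v. \<exists>G. (\<exists>F. cinf_on U F \<and> (\<forall>q\<in>U. F q = G q)) \<and> (\<forall>q\<in>U. pd H v q = G q))"
  proof (intro conjI allI)
    show "H differentiable_on U" using diff_on_local[OF assms(1)] F cinf_diff by metis
    fix v
    have "\<forall>q\<in>U. pd H v q = pd F v q" using pd_local[OF assms(1)] F by metis
    then show "\<exists>G. (\<exists>F. cinf_on U F \<and> (\<forall>q\<in>U. F q = G q)) \<and> (\<forall>q\<in>U. pd H v q = G q)"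
      using cinf_pd[OF F(1)] by (metis (no_types))
  qed
qed

lemma pd_works: "F differentiable at p \<Longrightarrow> (F has_derivative (\<lambda>v. pd F v p)) (at p)"
  unfolding pd_def using frechet_derivative_works by (metis eta_contract_eq)

lemma pd_eqI: "(F has_derivative D) (at p) \<Longrightarrow> pd F v p = D v"
  unfolding pd_def using frechet_derivative_at by metis

lemma pd_add: "F differentiable at p \<Longrightarrow> G differentiable at p \<Longrightarrow>
   pd (\<lambda>q. F q + G q) v p = pd F v p + pd G v p"
  by (rule pd_eqI) (intro has_derivative_add pd_works)

lemma pd_mult: "F differentiable at p \<Longrightarrow> G differentiable at p \<Longrightarrow>
   pd (\<lambda>q. F q * G q) v p = pd F v p * G p + F p * pd G v p"
  by (rule pd_eqI, rule has_derivative_eq_rhs, rule has_derivative_mult[OF pd_works pd_works]) (auto simp: algebra_simps)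

lemma pd_const: "pd (\<lambda>q. c) v p = 0"
  by (rule pd_eqI) (rule has_derivative_const)

lemma pd_exp: "F differentiable at p \<Longrightarrow> pd (\<lambda>q. exp (F q :: complex)) v p = exp (F p) * pd F v p"
  by (rule pd_eqI, rule has_derivative_eq_rhs, rule has_derivative_compose[OF pd_works DERIV_exp[unfolded has_field_derivative_def]]) auto

lemma pd_cnj: "F differentiable at p \<Longrightarrow> pd (\<lambda>q. cnj (F q)) v p = cnj (pd F v p)"
  by (rule pd_eqI) (rule has_derivative_cnj[OF pd_works])

lemma diff_exp: "F differentiable at p \<Longrightarrow> (\<lambda>q. exp (F q :: complex)) differentiable at p"
  unfolding differentiable_def using has_derivative_compose[OF _ DERIV_exp[unfolded has_field_derivative_def]] by blast

lemma diff_cnj: "F differentiable at p \<Longrightarrow> (\<lambda>q. cnj (F q)) differentiable at p"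
  unfolding differentiable_def using has_derivative_cnj by blast




inductive_set RR :: "'n::finite pt set \<Rightarrow> ('n pt \<Rightarrow> complex) set \<Rightarrow> ('n pt \<Rightarrow> complex) set"
  for U B where
  base: "cinf_on U F \<Longrightarrow> F \<in> RR U B"
| ext: "F \<in> B \<Longrightarrow> F \<in> RR U B"
| const: "(\<lambda>q. c) \<in> RR U B"
| add: "F \<in> RR U B \<Longrightarrow> G \<in> RR U B \<Longrightarrow> (\<lambda>q. F q + G q) \<in> RR U B"
| mult: "F \<in> RR U B \<Longrightarrow> G \<in> RR U B \<Longrightarrow> (\<lambda>q. F q * G q) \<in> RR U B"
| expo: "F \<in> RR U B \<Longrightarrow> (\<lambda>q. exp (F q)) \<in> RR U B"
| conj: "F \<in> RR U B \<Longrightarrow> (\<lambda>q. cnj (F q)) \<in> RR U B"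

lemma RR_step:
  assumes U: "open U"
    and hB: "\<And>b. b \<in> B \<Longrightarrow> b differentiable_on U \<and> (\<forall>v. \<exists>G\<in>RR U B. \<forall>q\<in>U. pd b v q = G q)"
    and F: "F \<in> RR U B"
  shows "F differentiable_on U \<and> (\<forall>v. \<exists>G\<in>RR U B. \<forall>q\<in>U. pd F v q = G q)"
  using F
proof induction
  case (base F)
  then show ?case using cinf_diff cinf_pd RR.base by blast
next
  case (ext F)
  then show ?case using hB by blast
next
  case (const c)
  then show ?case by (auto simp: pd_const intro!: RR.const)
next
  case (add F G)
  have dF: "\<And>q. q \<in> U \<Longrightarrow> F differentiable at q" and dG: "\<And>q. q \<in> U \<Longrightarrow> G differentiable at q"
    using add U by (auto simp: differentiable_on_eq_differentiable_at)
  show ?case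
  proof (intro conjI allI)
    show "(\<lambda>q. F q + G q) differentiable_on U" using add by (auto intro: differentiable_on_add)
    fix v
    obtain F' G' where "F' \<in> RR U B" "G' \<in> RR U B" "\<forall>q\<in>U. pd F v q = F' q" "\<forall>q\<in>U. pd G v q = G' q"
      using add by blast
    then show "\<exists>H\<in>RR U B. \<forall>q\<in>U. pd (\<lambda>q. F q + G q) v q = H q"
      by (intro bexI[of _ "\<lambda>q. F' q + G' q"] RR.add) (auto simp: pd_add dF dG)
  qed
next
  case (mult F G)
  have dF: "\<And>q. q \<in> U \<Longrightarrow> F differentiable at q" and dG: "\<And>q. q \<in> U \<Longrightarrow> G differentiable at q"
    using mult U by (auto simp: differentiable_on_eq_differentiable_at)
  show ?case
  proof (intro conjI allI)
    show "(\<lambda>q. F q * G q) differentiable_on U" using mult by (auto intro: differentiable_on_mult)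
    fix v
    obtain F' G' where "F' \<in> RR U B" "G' \<in> RR U B" "\<forall>q\<in>U. pd F v q = F' q" "\<forall>q\<in>U. pd G v q = G' q"
      using mult by blast
    then show "\<exists>H\<in>RR U B. \<forall>q\<in>U. pd (\<lambda>q. F q * G q) v q = H q"
      by (intro bexI[of _ "\<lambda>q. F' q * G q + F q * G' q"] RR.add RR.mult mult.hyps) (auto simp: pd_mult dF dG)
  qed
next
  case (expo F)
  have dF: "\<And>q. q \<in> U \<Longrightarrow> F differentiable at q"
    using expo U by (auto simp: differentiable_on_eq_differentiable_at)
  show ?case
  proof (intro conjI allI)
    show "(\<lambda>q. exp (F q)) differentiable_on U" using dF U diff_exp
      by (auto simp: differentiable_on_eq_differentiable_at)
    fix v
    obtain F' where "F' \<in> RR U B" "\<forall>q\<in>U. pd F v q = F' q"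
      using expo by blast
    then show "\<exists>H\<in>RR U B. \<forall>q\<in>U. pd (\<lambda>q. exp (F q)) v q = H q"
      by (intro bexI[of _ "\<lambda>q. exp (F q) * F' q"] RR.mult RR.expo expo.hyps) (auto simp: pd_exp dF)
  qed
next
  case (conj F)
  have dF: "\<And>q. q \<in> U \<Longrightarrow> F differentiable at q"
    using conj U by (auto simp: differentiable_on_eq_differentiable_at)
  show ?case
  proof (intro conjI allI)
    show "(\<lambda>q. cnj (F q)) differentiable_on U" using dF U diff_cnj
      by (auto simp: differentiable_on_eq_differentiable_at)
    fix v
    obtain F' where "F' \<in> RR U B" "\<forall>q\<in>U. pd F v q = F' q"
      using conj by blast
    then show "\<exists>H\<in>RR U B. \<forall>q\<in>U. pd (\<lambda>q. cnj (F q)) v q = H q"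
      by (intro bexI[of _ "\<lambda>q. cnj (F' q)"] RR.conj) (auto simp: pd_cnj dF)
  qed
qed

lemma RR_cinf:
  assumes U: "open U"
    and hB: "\<And>b. b \<in> B \<Longrightarrow> b differentiable_on U \<and> (\<forall>v. \<exists>G\<in>RR U B. \<forall>q\<in>U. pd b v q = G q)"
    and F: "F \<in> RR U B"
  shows "cinf_on U F"
  by (rule cinf_coinduct[OF U, where P = "\<lambda>F. F \<in> RR U B"]) (use F RR_step[OF U hB] in blast)+

definition sm :: "'n::finite pt set \<Rightarrow> ('n pt \<Rightarrow> complex) \<Rightarrow> bool" where
  "sm U F \<longleftrightarrow> open U \<and> cinf_on U F"

lemma sm_RR: "open U \<Longrightarrow> F \<in> RR U {} \<Longrightarrow> sm U F"
  unfolding sm_def using RR_cinf[of U "{}"] by blast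

lemma sm_cinf: "sm U F \<Longrightarrow> F \<in> RR U {}"
  unfolding sm_def by (blast intro: RR.base)

lemma sm_const[simp]: "open U \<Longrightarrow> sm U (\<lambda>q. c)"
  by (rule sm_RR) (auto intro: RR.const)

lemma sm_add[simp]: "sm U F \<Longrightarrow> sm U G \<Longrightarrow> sm U (\<lambda>q. F q + G q)"
  by (rule sm_RR) (auto simp: sm_def intro: RR.add RR.base)

lemma sm_mult[simp]: "sm U F \<Longrightarrow> sm U G \<Longrightarrow> sm U (\<lambda>q. F q * G q)"
  by (rule sm_RR) (auto simp: sm_def intro: RR.mult RR.base)

lemma sm_exp[simp]: "sm U F \<Longrightarrow> sm U (\<lambda>q. exp (F q))"
  by (rule sm_RR) (auto simp: sm_def intro: RR.expo RR.base)

lemma sm_cnj[simp]: "sm U F \<Longrightarrow> sm U (\<lambda>q. cnj (F q))"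
  by (rule sm_RR) (auto simp: sm_def intro: RR.conj RR.base)

lemma sm_uminus[simp]: "sm U F \<Longrightarrow> sm U (\<lambda>q. - F q)"
proof -
  assume a: "sm U F"
  then have "open U" by (simp add: sm_def)
  then have "sm U (\<lambda>q. (-1) * F q)" using sm_mult[OF sm_const a] by blast
  then show ?thesis by simp
qed

lemma sm_diff[simp]: "sm U F \<Longrightarrow> sm U G \<Longrightarrow> sm U (\<lambda>q. F q - G q)"
  using sm_add[of U F "\<lambda>q. - G q"] by simp

lemma sm_local: "sm U F \<Longrightarrow> (\<And>q. q \<in> U \<Longrightarrow> F q = G q) \<Longrightarrow> sm U G"
  unfolding sm_def using cinf_local by blast

lemma sm_pd: "sm U F \<Longrightarrow> sm U (pd F v)"
  unfolding sm_def using cinf_pd by blast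

lemma sm_diff_at: "sm U F \<Longrightarrow> q \<in> U \<Longrightarrow> F differentiable at q"
  unfolding sm_def using cinf_diff by (metis differentiable_on_eq_differentiable_at)




lemma pd_sym:
  assumes "sm U F" "p \<in> U"
  shows "pd (pd F v) w p = pd (pd F w) v p"
proof -
  have U: "open U" using assms by (simp add: sm_def)
  have dF: "\<And>q. q \<in> U \<Longrightarrow> (F has_derivative (\<lambda>v. pd F v q)) (at q)"
    using assms pd_works sm_diff_at by blast
  have d1: "((\<lambda>q. pd F v q) has_derivative (\<lambda>h. pd (pd F v) h p)) (at p)"
    using pd_works[OF sm_diff_at[OF sm_pd[OF assms(1)] assms(2)]] by simp
  have d2: "((\<lambda>q. pd F w q) has_derivative (\<lambda>h. pd (pd F w) h p)) (at p)"
    using pd_works[OF sm_diff_at[OF sm_pd[OF assms(1)] assms(2)]] by simp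
  show ?thesis using schwarz_gen[OF U assms(2) dF d1 d2] .
qed

lemma pd_lin:
  assumes "F differentiable at p" "G differentiable at p"
  shows "pd (\<lambda>q. (F q + c * G q) / 2) v p = (pd F v p + c * pd G v p) / 2"
proof -
  have "((\<lambda>q. (F q + c * G q) / 2) has_derivative (\<lambda>v. (pd F v p + c * pd G v p) / 2)) (at p)"
    using pd_works[OF assms(1)] pd_works[OF assms(2)] by (auto intro!: derivative_eq_intros)
  then show ?thesis by (rule pd_eqI)
qed

lemma pd_uminus: "F differentiable at p \<Longrightarrow> pd (\<lambda>q. - F q) v p = - pd F v p"
  by (rule pd_eqI) (intro has_derivative_minus pd_works)

definition wop :: "'n::finite pt set \<Rightarrow> 'n pt \<Rightarrow> 'n pt \<Rightarrow> complex \<Rightarrow> ('n pt \<Rightarrow> complex) \<Rightarrow> 'n pt \<Rightarrow> complex" where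
  "wop U x y s F p = (if p \<in> interior U then (pd F x p + s * pd F y p) / 2 else 0)"

lemma wop_cong[cong]:
  "x = x' \<Longrightarrow> y = y' \<Longrightarrow> s = s' \<Longrightarrow> p = p' \<Longrightarrow> (\<And>q. q \<in> U =simp=> F q = G q) \<Longrightarrow> wop U x y s F p = wop U x' y' s' G p'"
  unfolding wop_def simp_implies_def
  using pd_local[OF open_interior, of p U F G] interior_subset by (metis (no_types, lifting) subsetD)

lemma wop_eq: "open U \<Longrightarrow> p \<in> U \<Longrightarrow> wop U x y s F p = (pd F x p + s * pd F y p) / 2"
  unfolding wop_def by (simp add: interior_open)

lemma wop_out: "p \<notin> U \<Longrightarrow> wop U x y s F p = 0"
  using interior_subset[of U] by (auto simp: wop_def)

lemma sm_open: "sm U F \<Longrightarrow> open U" by (simp add: sm_def)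

lemma sm_divc[simp]: "sm U F \<Longrightarrow> sm U (\<lambda>q. F q / c)"
proof -
  assume a: "sm U F"
  then have "sm U (\<lambda>q. F q * inverse c)" by (simp add: sm_open)
  then show ?thesis by (simp add: divide_inverse)
qed

lemma sm_wop[simp]: "sm U F \<Longrightarrow> sm U (wop U x y s F)"
proof -
  assume a: "sm U F"
  have U: "open U" using a by (simp add: sm_def)
  have "sm U (\<lambda>q. (pd F x q + s * pd F y q) / 2)"
    using a U by (simp add: sm_pd)
  then show ?thesis by (rule sm_local) (simp add: wop_eq[OF U])
qed

lemma wop_const[simp]: "wop U x y s (\<lambda>q. c) p = 0"
  unfolding wop_def by (simp add: pd_const)

lemma wop_add[simp]: "sm U F \<Longrightarrow> sm U G \<Longrightarrow> wop U x y s (\<lambda>q. F q + G q) p = wop U x y s F p + wop U x y s G p"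
  by (cases "p \<in> U") (auto simp: wop_out wop_eq sm_open pd_add sm_diff_at field_simps)

lemma wop_mult[simp]: "sm U F \<Longrightarrow> sm U G \<Longrightarrow> wop U x y s (\<lambda>q. F q * G q) p = wop U x y s F p * G p + F p * wop U x y s G p"
  by (cases "p \<in> U") (auto simp: wop_out wop_eq sm_open pd_mult sm_diff_at field_simps)

lemma wop_exp[simp]: "sm U F \<Longrightarrow> wop U x y s (\<lambda>q. exp (F q)) p = exp (F p) * wop U x y s F p"
  by (cases "p \<in> U") (auto simp: wop_out wop_eq sm_open pd_exp sm_diff_at field_simps)

lemma wop_cnj: "sm U F \<Longrightarrow> cnj (wop U x y s F p) = wop U x y (cnj s) (\<lambda>q. cnj (F q)) p"
  by (cases "p \<in> U") (auto simp: wop_out wop_eq sm_open pd_cnj sm_diff_at field_simps)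

lemma wop_uminus[simp]: "sm U F \<Longrightarrow> wop U x y s (\<lambda>q. - F q) p = - wop U x y s F p"
  by (cases "p \<in> U") (auto simp: wop_out wop_eq sm_open pd_uminus sm_diff_at field_simps)

lemma wop_diff[simp]: "sm U F \<Longrightarrow> sm U G \<Longrightarrow> wop U x y s (\<lambda>q. F q - G q) p = wop U x y s F p - wop U x y s G p"
  using wop_add[of U F "\<lambda>q. - G q" x y s p] by simp

lemma wop_comm:
  assumes "sm U F"
  shows "wop U x y s (wop U x' y' s' F) p = wop U x' y' s' (wop U x y s F) p"
proof (cases "p \<in> U")
  case False then show ?thesis by (simp add: wop_out)
next
  case True
  have U: "open U" using assms by (simp add: sm_def)
  have e1: "pd (wop U x' y' s' F) v p = (pd (pd F x') v p + s' * pd (pd F y') v p) / 2" for v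
  proof -
    have "pd (wop U x' y' s' F) v p = pd (\<lambda>q. (pd F x' q + s' * pd F y' q) / 2) v p"
      by (rule pd_local[OF U True]) (simp add: wop_eq[OF U])
    also have "\<dots> = (pd (pd F x') v p + s' * pd (pd F y') v p) / 2"
      by (rule pd_lin) (use sm_diff_at[OF sm_pd[OF assms] True] in auto)
    finally show ?thesis .
  qed
  have e2: "pd (wop U x y s F) v p = (pd (pd F x) v p + s * pd (pd F y) v p) / 2" for v
  proof -
    have "pd (wop U x y s F) v p = pd (\<lambda>q. (pd F x q + s * pd F y q) / 2) v p"
      by (rule pd_local[OF U True]) (simp add: wop_eq[OF U])
    also have "\<dots> = (pd (pd F x) v p + s * pd (pd F y) v p) / 2"
      by (rule pd_lin) (use sm_diff_at[OF sm_pd[OF assms] True] in auto)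
    finally show ?thesis .
  qed
  show ?thesis
    unfolding wop_eq[OF U True] e1 e2
    using pd_sym[OF assms True, of x' x] pd_sym[OF assms True, of y' x] pd_sym[OF assms True, of x' y]
      pd_sym[OF assms True, of y' y] by (simp add: algebra_simps add_divide_distrib)
qed




lemma Lam_real_deriv:
  assumes "Lam lam differentiable at q"
  shows "pd (Lam lam) v q = complex_of_real (Re (pd (Lam lam) v q))"
proof -
  have d: "(Lam lam has_derivative (\<lambda>v. pd (Lam lam) v q)) (at q)" using pd_works[OF assms] .
  have "((\<lambda>x. Im (Lam lam x)) has_derivative (\<lambda>v. Im (pd (Lam lam) v q))) (at q)"
    using has_derivative_Im[OF d] .
  moreover have "(\<lambda>x. Im (Lam lam x)) = (\<lambda>x. 0)" by (simp add: Lam_def)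
  ultimately have "((\<lambda>x. 0::real) has_derivative (\<lambda>v. Im (pd (Lam lam) v q))) (at q)" by simp
  then have "(\<lambda>v. Im (pd (Lam lam) v q)) = (\<lambda>v. 0)"
    using has_derivative_unique has_derivative_const by blast
  then have "Im (pd (Lam lam) v q) = 0" by metis
  then show ?thesis by (simp add: complex_eq_iff)
qed

lemma logL_deriv:
  assumes "Lam lam differentiable at q" "lam q > 0"
  shows "(logL lam has_derivative (\<lambda>v. of_real (Re (pd (Lam lam) v q) * (1 / lam q)))) (at q)"
proof -
  have d: "(Lam lam has_derivative (\<lambda>v. pd (Lam lam) v q)) (at q)" using pd_works[OF assms(1)] .
  have d1: "(lam has_derivative (\<lambda>v. Re (pd (Lam lam) v q))) (at q)"
    using has_derivative_Re[OF d] by (simp add: Lam_def)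
  have d2: "((\<lambda>x. ln (lam x)) has_derivative (\<lambda>v. Re (pd (Lam lam) v q) * (1 / lam q))) (at q)"
    using DERIV_compose_FDERIV[OF DERIV_ln_divide[OF assms(2)] d1] .
  have eq: "logL lam = (\<lambda>x. complex_of_real (ln (lam x)))" by (simp add: fun_eq_iff logL_def)
  show ?thesis unfolding eq by (rule bounded_linear.has_derivative[OF bounded_linear_of_real d2])
qed

lemma logL_pd:
  assumes "Lam lam differentiable at q" "lam q > 0"
  shows "pd (logL lam) v q = pd (Lam lam) v q * exp (- logL lam q)"
proof -
  have "pd (logL lam) v q = of_real (Re (pd (Lam lam) v q) * (1 / lam q))"
    using pd_eqI[OF logL_deriv[OF assms]] .
  also have "\<dots> = pd (Lam lam) v q * exp (- logL lam q)"
  proof -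
    define x where "x = Re (pd (Lam lam) v q)"
    have x: "pd (Lam lam) v q = of_real x" unfolding x_def by (rule Lam_real_deriv[OF assms(1)])
    show ?thesis unfolding x x_def[symmetric]
      using assms(2) by (simp add: logL_def exp_minus exp_of_real divide_inverse flip: of_real_exp)
  qed
  finally show ?thesis .
qed

lemma sm_logL:
  assumes U: "open U" and c: "cinf_on U (Lam lam)" and pos: "\<forall>p\<in>U. lam p > 0"
  shows "sm U (logL lam)"
proof -
  have dL: "\<And>q. q \<in> U \<Longrightarrow> Lam lam differentiable at q"
    using c U cinf_diff by (metis differentiable_on_eq_differentiable_at)
  have "cinf_on U (logL lam)"
  proof (rule RR_cinf[OF U, of "{logL lam}"])
    show "logL lam \<in> RR U {logL lam}" by (rule RR.ext) simp
  next
    fix b assume "b \<in> {logL lam}"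
    then have b: "b = logL lam" by simp
    have G: "(\<lambda>q. pd (Lam lam) v q * exp ((\<lambda>q. -1) q * logL lam q)) \<in> RR U {logL lam}" for v
      by (intro RR.mult RR.base RR.expo RR.ext RR.const cinf_pd c) simp
    have "\<forall>q\<in>U. pd (logL lam) v q = pd (Lam lam) v q * exp ((\<lambda>q. -1) q * logL lam q)" for v
      using dL pos by (auto simp: logL_pd)
    moreover have "logL lam differentiable_on U"
      unfolding differentiable_on_eq_differentiable_at[OF U]
      using logL_deriv dL pos differentiable_def by blast
    ultimately show "b differentiable_on U \<and> (\<forall>v. \<exists>G\<in>RR U {logL lam}. \<forall>q\<in>U. pd b v q = G q)"
      using G b by (metis (no_types, lifting))
  qed
  then show ?thesis using U by (simp add: sm_def)
qed




context
  fixes U :: "'n::finite pt set"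
begin

abbreviation "DZ \<equiv> wop U (0, 1) (0, \<i>) (- \<i>)"
abbreviation "DZB \<equiv> wop U (0, 1) (0, \<i>) \<i>"
abbreviation "DS k \<equiv> wop U (axis k 1, 0) (axis k \<i>, 0) (- \<i>)"
abbreviation "DSB k \<equiv> wop U (axis k 1, 0) (axis k \<i>, 0) \<i>"

lemma c1: "sm U F \<Longrightarrow> DZ (DZB F) q = DZB (DZ F) q" by (rule wop_comm)
lemma c2: "sm U F \<Longrightarrow> DZ (DS k F) q = DS k (DZ F) q" by (rule wop_comm)
lemma c3: "sm U F \<Longrightarrow> DZ (DSB k F) q = DSB k (DZ F) q" by (rule wop_comm)
lemma c4: "sm U F \<Longrightarrow> DZB (DS k F) q = DS k (DZB F) q" by (rule wop_comm)
lemma c5: "sm U F \<Longrightarrow> DZB (DSB k F) q = DSB k (DZB F) q" by (rule wop_comm)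
lemma c6: "sm U F \<Longrightarrow> DS k (DSB l F) q = DSB l (DS k F) q" by (rule wop_comm)

lemma cv1: "open U \<Longrightarrow> q \<in> U \<Longrightarrow> dz F q = DZ F q"
  by (simp add: wop_eq dz_def)
lemma cv2: "open U \<Longrightarrow> q \<in> U \<Longrightarrow> dzb F q = DZB F q"
  by (simp add: wop_eq dzb_def)
lemma cv3: "open U \<Longrightarrow> q \<in> U \<Longrightarrow> ds k F q = DS k F q"
  by (simp add: wop_eq ds_def)
lemma cv4: "open U \<Longrightarrow> q \<in> U \<Longrightarrow> dsb k F q = DSB k F q"
  by (simp add: wop_eq dsb_def)

end

lemma div_exp: "(x::complex) / exp y = x * exp (- y)"
  by (simp add: exp_minus divide_inverse)

theorem lemma3p7:
  fixes U :: "'n::finite pt set" and lam :: "'n pt \<Rightarrow> real"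
    and f :: "'n pt \<Rightarrow> complex" and g :: nat
  assumes "g \<ge> 2" and "CARD('n) = 3 * g - 3"
    and "open U"
    and "cinf_on U (Lam lam)" and "\<forall>p\<in>U. lam p > 0"
    and "\<forall>p\<in>U. dz (dzb (logL lam)) p = Lam lam p"
    and "cinf_on U f"
  shows "\<forall>p\<in>U. \<forall>k l.
    vbar lam l (xi lam k f) p - xi lam k (vbar lam l f) p
      = PPbar lam (ee lam k l) p * PP lam f p - 2 * ff lam k l p * Box lam f p
        + dz (ff lam k l) p * dzb f p / Lam lam p"
proof (intro ballI allI)
  fix p k l assume p: "p \<in> U"
  note U = assms(3)
  have smL: "sm U (logL lam)" using sm_logL[OF U assms(4) assms(5)] .
  have smf: "sm U f" using assms(7) U by (simp add: sm_def)
  have Lam_exp: "\<And>q. q \<in> U \<Longrightarrow> Lam lam q = exp (logL lam q)"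
    using assms(5) by (simp add: Lam_def logL_def exp_of_real)
  have cnjL: "\<And>q. cnj (logL lam q) = logL lam q" by (simp add: logL_def)
  have pde: "\<And>q. q \<in> U \<Longrightarrow> DZB U (DZ U (logL lam)) q = exp (logL lam q)"
  proof -
    fix q assume q: "q \<in> U"
    have "dz (dzb (logL lam)) q = DZ U (DZB U (logL lam)) q"
      using U q by (simp add: cv1 cv2)
    also have "\<dots> = DZB U (DZ U (logL lam)) q" by (rule c1[OF smL])
    finally show "DZB U (DZ U (logL lam)) q = exp (logL lam q)"
      using assms(6) q Lam_exp by simp
  qed
  show "vbar lam l (xi lam k f) p - xi lam k (vbar lam l f) p
      = PPbar lam (ee lam k l) p * PP lam f p - 2 * ff lam k l p * Box lam f p
        + dz (ff lam k l) p * dzb f p / Lam lam p"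
    using p
    apply (simp add: vbar_def xi_def PP_def PPbar_def Box_def ee_def ff_def AA_def aa_def
        cv1[OF U] cv2[OF U] cv3[OF U] cv4[OF U] Lam_exp div_exp wop_cnj exp_cnj cnjL
        c1 c2 c3 c4 c5 c6 pde smL smf U)
    apply (simp add: exp_minus field_simps)
    done
qed


end
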